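(* For any finite multiset of items $I$, any item $i\in I$, and any finite sequence of bins $\sigma$, if $p$ is a valid packing of $I$ into $\sigma$, then there is a valid packing of $I\setminus\{i\}$ into $\sigma$ that uses a subset of the bins used by $p$.
   Context: Grid Scheduling setting: items have positive integer sizes; bins have positive integer sizes and form a sequence $\sigma=\langle b_1,\dots,b_m\rangle$. A partial packing assigns some items to bins such that the total size of the items in each bin is at most the bin's size; a packing assigns every item. A bin is used if it receives at least one item. A (partial) packing is valid if each empty bin is smaller than every unpacked item and smaller than every item packed in a bin occurring later in the sequence. *)

theory Defs
  imports Main
begin

text \<open>Items are elements of a finite set I of item identifiers (so that equal-sized
items are distinguishable, as in a multiset), with size function s.
Bins form a list sigma; bin j (0-indexed) has size sigma ! j.
A partial packing assigns some items to bin indices (None = unpacked).\<close>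

definition partial_packing :: "('a \<Rightarrow> nat) \<Rightarrow> 'a set \<Rightarrow> nat list \<Rightarrow> ('a \<Rightarrow> nat option) \<Rightarrow> bool" where
  "partial_packing s I \<sigma> p \<longleftrightarrow>
     (\<forall>x\<in>I. \<forall>j. p x = Some j \<longrightarrow> j < length \<sigma>) \<and>
     (\<forall>j<length \<sigma>. (\<Sum>x\<in>{x\<in>I. p x = Some j}. s x) \<le> \<sigma> ! j)"

definition packing :: "('a \<Rightarrow> nat) \<Rightarrow> 'a set \<Rightarrow> nat list \<Rightarrow> ('a \<Rightarrow> nat option) \<Rightarrow> bool" where
  "packing s I \<sigma> p \<longleftrightarrow> partial_packing s I \<sigma> p \<and> (\<forall>x\<in>I. p x \<noteq> None)"

definition used_bins :: "'a set \<Rightarrow> ('a \<Rightarrow> nat option) \<Rightarrow> nat set" where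
  "used_bins I p = {j. \<exists>x\<in>I. p x = Some j}"

definition valid :: "('a \<Rightarrow> nat) \<Rightarrow> 'a set \<Rightarrow> nat list \<Rightarrow> ('a \<Rightarrow> nat option) \<Rightarrow> bool" where
  "valid s I \<sigma> p \<longleftrightarrow>
     (\<forall>j<length \<sigma>. j \<notin> used_bins I p \<longrightarrow>
        (\<forall>x\<in>I. p x = None \<longrightarrow> \<sigma> ! j < s x) \<and>
        (\<forall>x\<in>I. \<forall>k. p x = Some k \<and> j < k \<longrightarrow> \<sigma> ! j < s x))"

definition valid_packing :: "('a \<Rightarrow> nat) \<Rightarrow> 'a set \<Rightarrow> nat list \<Rightarrow> ('a \<Rightarrow> nat option) \<Rightarrow> bool" where
  "valid_packing s I \<sigma> p \<longleftrightarrow> packing s I \<sigma> p \<and> valid s I \<sigma> p"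

end

theory Submission
  imports Defs
begin

theorem lemma1:
  fixes I :: "'a set" and s :: "'a \<Rightarrow> nat" and \<sigma> :: "nat list"
    and p :: "'a \<Rightarrow> nat option" and i :: 'a
  assumes "finite I"
    and "\<forall>x\<in>I. 0 < s x"
    and "\<forall>b\<in>set \<sigma>. 0 < b"
    and "i \<in> I"
    and "valid_packing s I \<sigma> p"
  shows "\<exists>q. valid_packing s (I - {i}) \<sigma> q \<and> used_bins (I - {i}) q \<subseteq> used_bins I p"
proof -
  define J where "J = I - {i}"
  have finJ: "finite J" using assms(1) J_def by simp
  have pp: "packing s I \<sigma> p" and pv: "valid s I \<sigma> p" using assms(5) by (auto simp: valid_packing_def)
  define P where "P q \<longleftrightarrow> packing s J \<sigma> q \<and> (\<forall>x\<in>J. the (q x) \<le> the (p x)) \<and> used_bins J q \<subseteq> used_bins I p" for q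
  define f :: "('a \<Rightarrow> nat option) \<Rightarrow> nat" where "f q = (\<Sum>x\<in>J. the (q x))" for q
  have P0: "P p"
  proof -
    have "partial_packing s J \<sigma> p"
    proof -
      have "\<forall>j<length \<sigma>. (\<Sum>x\<in>{x\<in>J. p x = Some j}. s x) \<le> (\<Sum>x\<in>{x\<in>I. p x = Some j}. s x)"
        using assms(1) by (auto intro!: sum_mono2 simp: J_def)
      moreover have "\<forall>j<length \<sigma>. (\<Sum>x\<in>{x\<in>I. p x = Some j}. s x) \<le> \<sigma> ! j"
        using pp unfolding packing_def partial_packing_def by blast
      moreover have "\<forall>x\<in>J. \<forall>j. p x = Some j \<longrightarrow> j < length \<sigma>"
        using pp unfolding packing_def partial_packing_def J_def by blast
      ultimately show ?thesis unfolding partial_packing_def using order_trans by blast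
    qed
    then show ?thesis using pp unfolding P_def packing_def used_bins_def J_def by auto
  qed
  obtain q where Pq: "P q" and qmin: "\<And>q'. P q' \<Longrightarrow> f q \<le> f q'"
    using ex_has_least_nat[of P p f] P0 by blast
  have qp: "packing s J \<sigma> q" and qle: "\<forall>x\<in>J. the (q x) \<le> the (p x)"
    and qu: "used_bins J q \<subseteq> used_bins I p" using Pq by (auto simp: P_def)
  have "valid s J \<sigma> q"
    unfolding valid_def
  proof (intro allI impI conjI ballI)
    fix j x assume j: "j < length \<sigma>" "j \<notin> used_bins J q" and x: "x \<in> J" "q x = None"
    then show "\<sigma> ! j < s x" using qp by (auto simp: packing_def)
  next
    fix j x k assume j: "j < length \<sigma>" "j \<notin> used_bins J q" and x: "x \<in> J"
      and k: "q x = Some k \<and> j < k"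
    show "\<sigma> ! j < s x"
    proof (rule ccontr)
      assume ns: "\<not> \<sigma> ! j < s x"
      have xI: "x \<in> I" using x J_def by simp
      obtain pk where pk: "p x = Some pk" using pp xI by (auto simp: packing_def)
      have "k \<le> pk" using qle x k pk by force
      have jp: "j \<in> used_bins I p"
      proof (rule ccontr)
        assume "j \<notin> used_bins I p"
        moreover have "j < pk" using \<open>k \<le> pk\<close> k by simp
        ultimately have "\<sigma> ! j < s x" using pv j(1) xI pk unfolding valid_def by blast
        with ns show False by simp
      qed
      define q' where "q' = q(x := Some j)"
      have set_j: "{y\<in>J. q' y = Some j} = {x}"
        using j(2) x unfolding q'_def used_bins_def by auto
      have pq': "packing s J \<sigma> q'"
        unfolding packing_def partial_packing_def
      proof (intro conjI allI impI ballI)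
        fix y j' assume "y \<in> J" "q' y = Some j'"
        then show "j' < length \<sigma>" using qp j(1) unfolding q'_def packing_def partial_packing_def
          by (auto split: if_splits)
      next
        fix j' assume j': "j' < length \<sigma>"
        show "(\<Sum>y\<in>{y\<in>J. q' y = Some j'}. s y) \<le> \<sigma> ! j'"
        proof (cases "j' = j")
          case True then show ?thesis using set_j ns by simp
        next
          case False
          have "(\<Sum>y\<in>{y\<in>J. q' y = Some j'}. s y) \<le> (\<Sum>y\<in>{y\<in>J. q y = Some j'}. s y)"
            using finJ False by (auto intro!: sum_mono2 simp: q'_def)
          also have "\<dots> \<le> \<sigma> ! j'" using qp j' by (auto simp: packing_def partial_packing_def)
          finally show ?thesis .
        qed
      next
        fix y assume "y \<in> J" then show "q' y \<noteq> None" using qp by (auto simp: q'_def packing_def)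
      qed
      have "\<forall>y\<in>J. the (q' y) \<le> the (p y)"
        using qle k pk \<open>k \<le> pk\<close> by (auto simp: q'_def)
      moreover have "used_bins J q' \<subseteq> used_bins I p"
        using qu jp unfolding used_bins_def q'_def by (auto split: if_splits)
      ultimately have "P q'" using pq' by (simp add: P_def)
      then have "f q \<le> f q'" by (rule qmin)
      moreover have "f q' < f q"
      proof -
        have "f q = the (q x) + (\<Sum>y\<in>J-{x}. the (q y))" unfolding f_def
          by (rule sum.remove[OF finJ x])
        moreover have "f q' = the (q' x) + (\<Sum>y\<in>J-{x}. the (q' y))" unfolding f_def
          by (rule sum.remove[OF finJ x])
        moreover have "(\<Sum>y\<in>J-{x}. the (q' y)) = (\<Sum>y\<in>J-{x}. the (q y))"
          by (rule sum.cong) (auto simp: q'_def)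
        ultimately show ?thesis using k by (simp add: q'_def)
      qed
      ultimately show False by simp
    qed
  qed
  then show ?thesis using qp qu by (auto simp: valid_packing_def J_def)
qed

end
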